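(* For every integer $n>1$, $\mathrm{Log}_{>1}(\mathbb{R})\not\subseteq \mathrm{Log}_{>1}(\mathbb{R}^n)$.
   Context: Modal formulas are built from a countable set of propositional variables using $\bot$, $\to$ and one unary modality $\lozenge$; $\Box\varphi$ abbreviates $\neg\lozenge\neg\varphi$. A frame is a pair $(X,R)$ with $R\subseteq X\times X$; a valuation assigns to each variable a subset of $X$; truth is defined as usual, with $x\models\lozenge\varphi$ iff there is $y$ with $xRy$ and $y\models\varphi$. A formula is valid in a frame if it is true at every point under every valuation. For a metric space $(X,d)$, the farness frame is $(X,R_{>1})$ where $x R_{>1} y$ iff $d(x,y)>1$, and $\mathrm{Log}_{>1}(X)$ denotes the set of modal formulas valid in this frame. $\mathbb{R}^n$ carries the Euclidean metric. *)

theory Defs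
  imports "HOL-Analysis.Analysis"
begin

datatype fm = Var nat | Bot | Imp fm fm | Dia fm

definition Neg :: "fm \<Rightarrow> fm" where "Neg \<phi> = Imp \<phi> Bot"
definition Box :: "fm \<Rightarrow> fm" where "Box \<phi> = Neg (Dia (Neg \<phi>))"

fun sat :: "'a set \<Rightarrow> ('a \<Rightarrow> 'a \<Rightarrow> bool) \<Rightarrow> (nat \<Rightarrow> 'a set) \<Rightarrow> 'a \<Rightarrow> fm \<Rightarrow> bool" where
  "sat X R V x (Var p) = (x \<in> V p)"
| "sat X R V x Bot = False"
| "sat X R V x (Imp \<phi> \<psi>) = (sat X R V x \<phi> \<longrightarrow> sat X R V x \<psi>)"
| "sat X R V x (Dia \<phi>) = (\<exists>y\<in>X. R x y \<and> sat X R V y \<phi>)"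

definition valid_in_frame :: "'a set \<Rightarrow> ('a \<Rightarrow> 'a \<Rightarrow> bool) \<Rightarrow> fm \<Rightarrow> bool" where
  "valid_in_frame X R \<phi> \<longleftrightarrow>
     (\<forall>V. (\<forall>p. V p \<subseteq> X) \<longrightarrow> (\<forall>x\<in>X. sat X R V x \<phi>))"

definition far_rel :: "'a::metric_space \<Rightarrow> 'a \<Rightarrow> bool" where
  "far_rel x y \<longleftrightarrow> dist x y > 1"

definition Log_far :: "'a::metric_space set \<Rightarrow> fm set" where
  "Log_far X = {\<phi>. valid_in_frame X far_rel \<phi>}"

end

theory Submission
  imports Defs
begin

definition And :: "fm \<Rightarrow> fm \<Rightarrow> fm" where "And a b = Neg (Imp a (Neg b))"
definition Ex :: "fm \<Rightarrow> fm" where "Ex a = Dia (Dia a)"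
definition NP :: "nat \<Rightarrow> fm" where "NP k = Neg (Dia (Var k))"

definition helly :: fm where
  "helly = Imp (Ex (And (NP 0) (NP 1)))
            (Imp (Ex (And (NP 1) (NP 2)))
             (Imp (Ex (And (NP 0) (NP 2)))
              (Ex (And (NP 0) (And (NP 1) (NP 2))))))"

lemma sat_NP: "sat UNIV far_rel V z (NP k) = (\<forall>s\<in>V k. dist z s \<le> 1)"
  by (auto simp: NP_def Neg_def far_rel_def not_less[symmetric])

lemma sat_And: "sat X R V z (And a b) = (sat X R V z a \<and> sat X R V z b)"
  by (auto simp: And_def Neg_def)

lemma sat_Ex: "sat X R V z (Ex a) = (\<exists>y\<in>X. R z y \<and> (\<exists>w\<in>X. R y w \<and> sat X R V w a))"
  by (auto simp: Ex_def)

lemma median_ok: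
  fixes a b c s :: real
  assumes "\<bar>a - s\<bar> \<le> 1" "\<bar>c - s\<bar> \<le> 1"
  shows "\<bar>max (min a b) (min (max a b) c) - s\<bar> \<le> 1"
  using assms by (auto simp: max_def min_def abs_if split: if_splits)

lemma median_ok2:
  fixes a b c s :: real
  assumes "\<bar>a - s\<bar> \<le> 1" "\<bar>b - s\<bar> \<le> 1"
  shows "\<bar>max (min a b) (min (max a b) c) - s\<bar> \<le> 1"
  using assms by (auto simp: max_def min_def abs_if split: if_splits)

lemma median_ok3:
  fixes a b c s :: real
  assumes "\<bar>b - s\<bar> \<le> 1" "\<bar>c - s\<bar> \<le> 1"
  shows "\<bar>max (min a b) (min (max a b) c) - s\<bar> \<le> 1"
  using assms by (auto simp: max_def min_def abs_if split: if_splits)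

lemma helly_R: "helly \<in> Log_far (UNIV :: real set)"
proof -
  { fix V and x :: real
    assume h1: "sat UNIV far_rel V x (Ex (And (NP 0) (NP 1)))"
       and h2: "sat UNIV far_rel V x (Ex (And (NP 1) (NP 2)))"
       and h3: "sat UNIV far_rel V x (Ex (And (NP 0) (NP 2)))"
    from h1 obtain a where a0: "\<forall>s\<in>V 0. \<bar>a - s\<bar> \<le> 1" and a1: "\<forall>s\<in>V 1. \<bar>a - s\<bar> \<le> 1"
      by (auto simp: sat_Ex sat_And sat_NP dist_real_def)
    from h2 obtain b where b1: "\<forall>s\<in>V 1. \<bar>b - s\<bar> \<le> 1" and b2: "\<forall>s\<in>V 2. \<bar>b - s\<bar> \<le> 1"
      by (auto simp: sat_Ex sat_And sat_NP dist_real_def)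
    from h3 obtain c where c0: "\<forall>s\<in>V 0. \<bar>c - s\<bar> \<le> 1" and c2: "\<forall>s\<in>V 2. \<bar>c - s\<bar> \<le> 1"
      by (auto simp: sat_Ex sat_And sat_NP dist_real_def)
    define m where "m = max (min a c) (min (max a c) b)"
    have m0: "\<forall>s\<in>V 0. \<bar>m - s\<bar> \<le> 1" using a0 c0 median_ok2 m_def by blast
    have m1: "\<forall>s\<in>V 1. \<bar>m - s\<bar> \<le> 1" using a1 b1 median_ok m_def by blast
    have m2: "\<forall>s\<in>V 2. \<bar>m - s\<bar> \<le> 1" using c2 b2 median_ok3 m_def by blast
    define y where "y = \<bar>x\<bar> + \<bar>m\<bar> + 2"
    have "far_rel x y" "far_rel y m" unfolding far_rel_def dist_real_def y_def by auto
    hence "sat UNIV far_rel V x (Ex (And (NP 0) (And (NP 1) (NP 2))))"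
      using m0 m1 m2 by (auto simp: sat_Ex sat_And sat_NP dist_real_def)
  }
  thus ?thesis unfolding Log_far_def valid_in_frame_def helly_def by auto
qed


lemma norm_sq_sum: "(norm (v::real^'n))^2 = (\<Sum>k\<in>UNIV. (v$k)^2)"
  unfolding power2_norm_eq_inner inner_vec_def by (simp add: power2_eq_square)

lemma norm_sq_ge:
  fixes v :: "real^'n"
  assumes "i \<noteq> j"
  shows "(v$i)^2 + (v$j)^2 \<le> (norm v)^2"
proof -
  have "(v$i)^2 + (v$j)^2 = (\<Sum>k\<in>{i,j}. (v$k)^2)" using assms by simp
  also have "\<dots> \<le> (\<Sum>k\<in>UNIV. (v$k)^2)" by (rule sum_mono2) auto
  finally show ?thesis by (simp add: norm_sq_sum)
qed

lemma norm_sq_eq: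
  fixes v :: "real^'n"
  assumes "i \<noteq> j" "\<forall>k. k \<noteq> i \<and> k \<noteq> j \<longrightarrow> v$k = 0"
  shows "(norm v)^2 = (v$i)^2 + (v$j)^2"
proof -
  have "(\<Sum>k\<in>UNIV. (v$k)^2) = (\<Sum>k\<in>{i,j}. (v$k)^2)"
    by (rule sum.mono_neutral_right) (use assms in auto)
  thus ?thesis using assms by (simp add: norm_sq_sum)
qed

lemma dist_le1_iff: "dist x y \<le> 1 \<longleftrightarrow> (dist x y)^2 \<le> 1"
  by (metis abs_of_nonneg abs_square_le_1 zero_le_dist)

lemma comp_le_dist: "\<bar>(x::real^'n)$k - y$k\<bar> \<le> dist x y"
  using component_le_norm_cart[of "x - y" k] by (simp add: dist_norm)

theorem proposition3p1:
  assumes "CARD('n::finite) > 1"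
  shows "\<not> (Log_far (UNIV :: real set) \<subseteq> Log_far (UNIV :: (real ^ 'n) set))"
proof
  assume sub: "Log_far (UNIV :: real set) \<subseteq> Log_far (UNIV :: (real ^ 'n) set)"
  obtain i j :: 'n where ij: "i \<noteq> j"
  proof -
    have "\<not> (\<forall>i j :: 'n. i = j)"
    proof
      assume "\<forall>i j :: 'n. i = j"
      hence u: "(UNIV :: 'n set) = {undefined}" by auto
      have "CARD('n) = 1" by (subst u) simp
      thus False using assms by simp
    qed
    thus ?thesis using that by blast
  qed
  define vec2 :: "real \<Rightarrow> real \<Rightarrow> real^'n" where
    "vec2 a b = (\<chi> k. if k = i then a else if k = j then b else 0)" for a b
  have v2i: "vec2 a b $ i = a" for a b by (simp add: vec2_def)
  have v2j: "vec2 a b $ j = b" for a b using ij by (simp add: vec2_def)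
  have d2: "(dist (vec2 a b) (vec2 c d))^2 = (a-c)^2 + (b-d)^2" for a b c d
    unfolding dist_norm by (subst norm_sq_eq[OF ij]) (use ij in \<open>auto simp: vec2_def\<close>)
  have dge: "(z$i - c)^2 + (z$j - d)^2 \<le> (dist z (vec2 c d))^2" for z c d
    using norm_sq_ge[OF ij, of "z - vec2 c d"] by (simp add: dist_norm v2i v2j)
  define V :: "nat \<Rightarrow> (real^'n) set" where
    "V k = (if k = 0 then {vec2 0 0} else if k = 1 then {vec2 2 0} else if k = 2 then {vec2 1 (3/2)} else {})" for k
  have "helly \<in> Log_far (UNIV :: (real ^ 'n) set)" using helly_R sub by blast
  hence hv: "sat UNIV far_rel V 0 helly"
    unfolding Log_far_def valid_in_frame_def by auto
  define y :: "real^'n" where "y = (\<chi> k. 10)"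
  have farw: "far_rel 0 y \<and> far_rel y (vec2 a b)" if "a \<le> 2" for a b
  proof -
    have "\<bar>(0::real^'n)$i - y$i\<bar> \<le> dist 0 y" by (rule comp_le_dist)
    moreover have "\<bar>y$i - vec2 a b$i\<bar> \<le> dist y (vec2 a b)" by (rule comp_le_dist)
    ultimately show ?thesis using that by (auto simp: far_rel_def y_def v2i)
  qed
  have E1: "sat UNIV far_rel V 0 (Ex (And (NP 0) (NP 1)))"
  proof -
    have "sat UNIV far_rel V (vec2 1 0) (And (NP 0) (NP 1))"
      by (simp add: sat_And sat_NP V_def dist_le1_iff d2)
    thus ?thesis using farw[of 1 0] by (auto simp: sat_Ex)
  qed
  have E2: "sat UNIV far_rel V 0 (Ex (And (NP 1) (NP 2)))"
  proof -
    have "sat UNIV far_rel V (vec2 (3/2) (3/4)) (And (NP 1) (NP 2))"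
      by (simp add: sat_And sat_NP V_def dist_le1_iff d2 del: power2_eq_square) (simp add: power2_eq_square)
    thus ?thesis using farw[of "3/2" "3/4"] by (auto simp: sat_Ex)
  qed
  have E3: "sat UNIV far_rel V 0 (Ex (And (NP 0) (NP 2)))"
  proof -
    have "sat UNIV far_rel V (vec2 (1/2) (3/4)) (And (NP 0) (NP 2))"
      by (simp add: sat_And sat_NP V_def dist_le1_iff d2 del: power2_eq_square) (simp add: power2_eq_square)
    thus ?thesis using farw[of "1/2" "3/4"] by (auto simp: sat_Ex)
  qed
  have "sat UNIV far_rel V 0 (Ex (And (NP 0) (And (NP 1) (NP 2))))"
    using hv E1 E2 E3 by (simp add: helly_def)
  then obtain z where z0: "(dist z (vec2 0 0))^2 \<le> 1" and z1: "(dist z (vec2 2 0))^2 \<le> 1"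
    and z2: "(dist z (vec2 1 (3/2)))^2 \<le> 1"
    by (auto simp: sat_Ex sat_And sat_NP V_def dist_le1_iff)
  have a0: "(z$i - 0)^2 + (z$j - 0)^2 \<le> 1" using dge[of z 0 0] z0 by linarith
  have a1: "(z$i - 2)^2 + (z$j - 0)^2 \<le> 1" using dge[of z 2 0] z1 by linarith
  have a2: "(z$i - 1)^2 + (z$j - 3/2)^2 \<le> 1" using dge[of z 1 "3/2"] z2 by linarith
  define a where "a = z$i"
  define b where "b = z$j"
  have s: "(a - 1)^2 + b^2 \<le> 0" using a0 a1 unfolding a_def b_def by (simp add: power2_eq_square algebra_simps)
  have "(a-1)^2 \<ge> 0" "b^2 \<ge> 0" by auto
  hence "b^2 = 0" "(a-1)^2 = 0" using s by linarith+
  hence "b = 0" "a = 1" by auto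
  thus False using a2 unfolding a_def b_def by (simp add: power2_eq_square)
qed

end
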